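(* Let $\varphi_1,\varphi_2\colon\mathbb{R}^n\to\overline{\mathbb{R}}$ be proper nearly convex functions. If $\mathrm{ri}(\mathrm{dom}\,\varphi_1)\cap\mathrm{ri}(\mathrm{dom}\,\varphi_2)\neq \emptyset$, then $$\partial(\varphi_1+\varphi_2)(\bar x)=\partial\varphi_1 (\bar x)+\partial\varphi_2 (\bar x)$$ for all $\bar x\in \mathrm{dom}\,\varphi_1\cap\mathrm{dom}\,\varphi_2$.
   Context: $\overline{\mathbb{R}}=[-\infty,\infty]$; proper means nonempty domain $\mathrm{dom}\,\varphi=\{x\mid\varphi(x)<\infty\}$ and never $-\infty$. A set $D$ is nearly convex if there is a convex $E$ with $E\subset D\subset\overline{E}$; a function is nearly convex if its epigraph is nearly convex. $\mathrm{ri}\,D=\{a\in D\mid\exists\delta>0,\ B(a;\delta)\cap\mathrm{aff}\,D\subset D\}$. For $\bar x\in\mathrm{dom}\,\psi$, $\partial\psi(\bar x)=\{\xi\in\mathbb{R}^n\mid\langle\xi,x-\bar x\rangle\le\psi(x)-\psi(\bar x)\ \forall x\in\mathbb{R}^n\}$. Sums of sets are Minkowski sums. *)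

theory Defs
  imports "HOL-Analysis.Analysis" "HOL-Library.Extended_Real"
begin

definition edom :: "('a \<Rightarrow> ereal) \<Rightarrow> 'a set" where
  "edom f = {x. f x < \<infinity>}"

definition proper_fun :: "('a \<Rightarrow> ereal) \<Rightarrow> bool" where
  "proper_fun f \<longleftrightarrow> edom f \<noteq> {} \<and> (\<forall>x. f x \<noteq> -\<infinity>)"

definition epigraph :: "('a \<Rightarrow> ereal) \<Rightarrow> ('a \<times> real) set" where
  "epigraph f = {(x, t). f x \<le> ereal t}"

definition nearly_convex_set :: "'a::real_normed_vector set \<Rightarrow> bool" where
  "nearly_convex_set D \<longleftrightarrow> (\<exists>E. convex E \<and> E \<subseteq> D \<and> D \<subseteq> closure E)"

definition nearly_convex_fun :: "('a::real_normed_vector \<Rightarrow> ereal) \<Rightarrow> bool" where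
  "nearly_convex_fun f \<longleftrightarrow> nearly_convex_set (epigraph f)"

text \<open>Subdifferential at a point of the domain (value of psi there is finite for proper psi).\<close>
definition subdiff :: "('a::real_inner \<Rightarrow> ereal) \<Rightarrow> 'a \<Rightarrow> 'a set" where
  "subdiff psi xb = {\<xi>. \<forall>x. ereal (inner \<xi> (x - xb)) \<le> psi x - psi xb}"

end

theory Submission
  imports Defs
begin

lemma ri_reflect:
  fixes S :: "'a::euclidean_space set"
  assumes "x0 \<in> rel_interior S" "x \<in> S"
  shows "\<exists>e>0. x0 - e *\<^sub>R (x - x0) \<in> S"
proof -
  obtain r where r: "r > 0" "ball x0 r \<inter> affine hull S \<subseteq> S"
    using assms(1) mem_rel_interior_ball by blast
  have x0S: "x0 \<in> S" using assms(1) rel_interior_subset by blast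
  show ?thesis
  proof (cases "x = x0")
    case True then show ?thesis using x0S by (intro exI[of _ 1]) auto
  next
    case False
    define e where "e = r / (2 * norm (x - x0))"
    have np: "norm (x - x0) > 0" using False by auto
    have e0: "e > 0" using r np by (simp add: e_def)
    have "dist x0 (x0 - e *\<^sub>R (x - x0)) = e * norm (x - x0)"
      using e0 by (simp add: dist_norm)
    also have "\<dots> = r / 2" using np by (simp add: e_def)
    finally have "x0 - e *\<^sub>R (x - x0) \<in> ball x0 r" using r by simp
    moreover have "x0 - e *\<^sub>R (x - x0) \<in> affine hull S"
    proof -
      have "(1 + e) *\<^sub>R x0 + (- e) *\<^sub>R x \<in> affine hull S"
        using mem_affine[OF affine_affine_hull, of x0 S x "1 + e" "-e"] x0S assms(2)
        by (simp add: hull_inc)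
      moreover have "(1 + e) *\<^sub>R x0 + (- e) *\<^sub>R x = x0 - e *\<^sub>R (x - x0)"
        by (simp add: algebra_simps)
      ultimately show ?thesis by simp
    qed
    ultimately show ?thesis using r e0 by blast
  qed
qed

lemma epi_fin:
  assumes "proper_fun f" "f x < \<infinity>"
  obtains b where "f x = ereal b" "(x, b) \<in> epigraph f"
proof -
  have "f x \<noteq> -\<infinity>" using assms(1) by (simp add: proper_fun_def)
  then obtain b where "f x = ereal b" using assms(2) by (cases "f x") auto
  then show ?thesis using that by (simp add: epigraph_def)
qed

theorem mainTheorem4:
  fixes phi1 phi2 :: "real ^ 'n \<Rightarrow> ereal"
  assumes "proper_fun phi1" and "proper_fun phi2"
    and "nearly_convex_fun phi1" and "nearly_convex_fun phi2"
    and "rel_interior (edom phi1) \<inter> rel_interior (edom phi2) \<noteq> {}"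
  shows "\<forall>xb \<in> edom phi1 \<inter> edom phi2.
           subdiff (\<lambda>x. phi1 x + phi2 x) xb =
           {a + b | a b. a \<in> subdiff phi1 xb \<and> b \<in> subdiff phi2 xb}"
proof
  fix xb assume xb: "xb \<in> edom phi1 \<inter> edom phi2"
  obtain a1 where a1: "phi1 xb = ereal a1" "(xb, a1) \<in> epigraph phi1"
    using epi_fin[OF assms(1)] xb by (auto simp: edom_def)
  obtain a2 where a2: "phi2 xb = ereal a2" "(xb, a2) \<in> epigraph phi2"
    using epi_fin[OF assms(2)] xb by (auto simp: edom_def)
  have fin1: "\<And>x. phi1 x = \<infinity> \<or> (\<exists>b. phi1 x = ereal b)"
    using assms(1) unfolding proper_fun_def by (metis ereal_cases)
  have fin2: "\<And>x. phi2 x = \<infinity> \<or> (\<exists>b. phi2 x = ereal b)"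
    using assms(2) unfolding proper_fun_def by (metis ereal_cases)
  show "subdiff (\<lambda>x. phi1 x + phi2 x) xb =
           {a + b | a b. a \<in> subdiff phi1 xb \<and> b \<in> subdiff phi2 xb}"
  proof
    show "{a + b | a b. a \<in> subdiff phi1 xb \<and> b \<in> subdiff phi2 xb}
          \<subseteq> subdiff (\<lambda>x. phi1 x + phi2 x) xb"
    proof clarify
      fix u v assume u: "u \<in> subdiff phi1 xb" and v: "v \<in> subdiff phi2 xb"
      show "u + v \<in> subdiff (\<lambda>x. phi1 x + phi2 x) xb"
        unfolding subdiff_def
      proof clarify
        fix x
        have hu: "ereal (u \<bullet> (x - xb)) \<le> phi1 x - ereal a1"
          using u a1 by (simp add: subdiff_def)
        have hv: "ereal (v \<bullet> (x - xb)) \<le> phi2 x - ereal a2"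
          using v a2 by (simp add: subdiff_def)
        show "ereal ((u + v) \<bullet> (x - xb)) \<le> phi1 x + phi2 x - (phi1 xb + phi2 xb)"
          using fin1[of x] fin2[of x] hu hv a1 a2
          by (auto simp: inner_add_left)
      qed
    qed
  next
    show "subdiff (\<lambda>x. phi1 x + phi2 x) xb
          \<subseteq> {a + b | a b. a \<in> subdiff phi1 xb \<and> b \<in> subdiff phi2 xb}"
    proof
      fix \<xi> assume \<xi>: "\<xi> \<in> subdiff (\<lambda>x. phi1 x + phi2 x) xb"
      have subg: "\<xi> \<bullet> (x - xb) \<le> s + t - a1 - a2"
        if "(x, s) \<in> epigraph phi1" "(x, t) \<in> epigraph phi2" for x s t
      proof -
        have h: "ereal (\<xi> \<bullet> (x - xb)) \<le> phi1 x + phi2 x - (ereal a1 + ereal a2)"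
          using \<xi> a1 a2 by (simp add: subdiff_def)
        have l1: "phi1 x \<le> ereal s" "phi2 x \<le> ereal t" using that by (auto simp: epigraph_def)
        obtain b1 b2 where "phi1 x = ereal b1" "phi2 x = ereal b2" "b1 \<le> s" "b2 \<le> t"
          using l1 fin1[of x] fin2[of x] by fastforce
        then show ?thesis using h by simp
      qed
      obtain E1 where E1: "convex E1" "E1 \<subseteq> epigraph phi1" "epigraph phi1 \<subseteq> closure E1"
        using assms(3) by (auto simp: nearly_convex_fun_def nearly_convex_set_def)
      obtain E2 where E2: "convex E2" "E2 \<subseteq> epigraph phi2" "epigraph phi2 \<subseteq> closure E2"
        using assms(4) by (auto simp: nearly_convex_fun_def nearly_convex_set_def)
      define L where "L = (\<lambda>w :: ((real^'n) \<times> real) \<times> ((real^'n) \<times> real).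
          (fst (fst w) - fst (snd w), snd (fst w) + snd (snd w) - \<xi> \<bullet> fst (snd w)))"
      have linL: "linear L"
        unfolding linear_iff L_def
        by (auto simp: prod_eq_iff inner_add_right algebra_simps)
      have contL: "continuous_on X L" for X
        unfolding L_def by (intro continuous_intros)
      define D where "D = L ` (E1 \<times> E2)"
      have convD: "convex D" unfolding D_def
        using convex_linear_image[OF linL convex_Times[OF E1(1) E2(1)]] .
      have K1: "L ((x, s), (y, t)) \<in> closure D"
        if "(x, s) \<in> epigraph phi1" "(y, t) \<in> epigraph phi2" for x s y t
      proof -
        have "L ` closure (E1 \<times> E2) \<subseteq> closure D"
          by (rule image_closure_subset[OF contL]) (auto simp: D_def closure_subset)
        moreover have "((x, s), (y, t)) \<in> closure (E1 \<times> E2)"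
          using that E1 E2 by (auto simp: closure_Times)
        ultimately show ?thesis by blast
      qed
      have LD: "L ((x, s), (y, t)) = (x - y, s + t - \<xi> \<bullet> y)" for x s y t
        by (simp add: L_def)
      define c where "c = a1 + a2 - \<xi> \<bullet> xb"
      have K2: "r \<ge> c" if rD: "(0, r) \<in> D" for r
      proof -
        obtain x s y t where "(x, s) \<in> E1" "(y, t) \<in> E2" "(0, r) = L ((x, s), (y, t))"
          using rD unfolding D_def by force
        then have "x = y" "r = s + t - \<xi> \<bullet> y" "(x, s) \<in> epigraph phi1" "(x, t) \<in> epigraph phi2"
          using E1 E2 by (auto simp: LD)
        then show ?thesis using subg[of x s t] by (simp add: c_def inner_diff_right)
      qed
      define p where "p = (0 :: real^'n, c)"
      define q where "q = (0 :: real^'n, c + 1)"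
      have pD: "p \<in> closure D"
        using K1[OF a1(2) a2(2)] by (simp add: LD p_def c_def)
      have qD: "q \<in> closure D"
      proof -
        have "(xb, a1 + 1) \<in> epigraph phi1" using a1 by (simp add: epigraph_def)
        from K1[OF this a2(2)] show ?thesis by (simp add: LD q_def c_def algebra_simps)
      qed
      have pri: "p \<notin> rel_interior D"
      proof
        assume "p \<in> rel_interior D"
        then obtain e where e: "e > 0" "ball p e \<inter> affine hull D \<subseteq> D"
          using mem_rel_interior_ball by blast
        have "closure D \<subseteq> affine hull D" by (rule closure_affine_hull)
        then have "(1 + e/2) *\<^sub>R p + (- e/2) *\<^sub>R q \<in> affine hull D"
          using pD qD by (intro mem_affine[OF affine_affine_hull]) auto
        moreover have "(1 + e/2) *\<^sub>R p + (- e/2) *\<^sub>R q = (0, c - e/2)"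
          by (simp add: p_def q_def algebra_simps)
        moreover have "(0, c - e/2) \<in> ball p e"
          using e by (simp add: p_def dist_Pair_Pair dist_real_def)
        ultimately have "(0, c - e/2) \<in> D" using e by auto
        then show False using K2 e by fastforce
      qed
      obtain a where a: "a \<noteq> 0" "\<And>y. y \<in> closure D \<Longrightarrow> a \<bullet> p \<le> a \<bullet> y"
          "\<And>y. y \<in> rel_interior D \<Longrightarrow> a \<bullet> p < a \<bullet> y"
        using supporting_hyperplane_relative_frontier[OF convD pD pri] by blast
      obtain az ar where azr: "a = (az, ar)" by (cases a)
      have ineq: "ar * c \<le> az \<bullet> (x - y) + ar * (s + t - \<xi> \<bullet> y)"
        if "(x, s) \<in> epigraph phi1" "(y, t) \<in> epigraph phi2" for x s y t
        using a(2)[OF K1[OF that]] by (simp add: LD azr p_def)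
      have ar0: "ar \<ge> 0" using a(2)[OF qD] by (simp add: azr p_def q_def algebra_simps)
      have arn0: "ar \<noteq> 0"
      proof
        assume ar: "ar = 0"
        obtain x0 where x0: "x0 \<in> rel_interior (edom phi1)" "x0 \<in> rel_interior (edom phi2)"
          using assms(5) by blast
        have epidom1: "\<exists>s. (x, s) \<in> epigraph phi1" if "x \<in> edom phi1" for x
          using epi_fin[OF assms(1), of x] that by (auto simp: edom_def)
        have epidom2: "\<exists>s. (x, s) \<in> epigraph phi2" if "x \<in> edom phi2" for x
          using epi_fin[OF assms(2), of x] that by (auto simp: edom_def)
        have base: "az \<bullet> (x - y) \<ge> 0" if "x \<in> edom phi1" "y \<in> edom phi2" for x y
          using ineq epidom1[OF that(1)] epidom2[OF that(2)] ar by auto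
        have x0d1: "x0 \<in> edom phi1" "x0 \<in> edom phi2"
          using x0 rel_interior_subset by blast+
        have z1: "az \<bullet> (x - x0) = 0" if xd: "x \<in> edom phi1" for x
        proof -
          obtain e where "e > 0" and ed: "x0 - e *\<^sub>R (x - x0) \<in> edom phi1"
            using ri_reflect[OF x0(1) xd] by blast
          have "az \<bullet> (x0 - e *\<^sub>R (x - x0) - x0) \<ge> 0" using base[OF ed x0d1(2)] .
          then have "e * (az \<bullet> (x - x0)) \<le> 0" by (simp add: inner_diff_right)
          then have "az \<bullet> (x - x0) \<le> 0" using \<open>e > 0\<close>
            by (simp add: mult_le_0_iff)
          moreover have "az \<bullet> (x - x0) \<ge> 0" using base[OF xd x0d1(2)] .
          ultimately show ?thesis by simp
        qed
        have z2: "az \<bullet> (x0 - y) = 0" if yd: "y \<in> edom phi2" for y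
        proof -
          obtain e where "e > 0" and ed: "x0 - e *\<^sub>R (y - x0) \<in> edom phi2"
            using ri_reflect[OF x0(2) yd] by blast
          have "az \<bullet> (x0 - (x0 - e *\<^sub>R (y - x0))) \<ge> 0" using base[OF x0d1(1) ed] .
          then have "e * (az \<bullet> (y - x0)) \<ge> 0" by (simp add: inner_diff_right)
          then have "az \<bullet> (y - x0) \<ge> 0" using \<open>e > 0\<close>
            by (simp add: zero_le_mult_iff)
          moreover have "az \<bullet> (x0 - y) \<ge> 0" using base[OF x0d1(1) yd] .
          ultimately show ?thesis by (simp add: inner_diff_right)
        qed
        have E1ne: "E1 \<noteq> {}" using E1(3) a1(2) by auto
        have E2ne: "E2 \<noteq> {}" using E2(3) a2(2) by auto
        have "D \<noteq> {}" using E1ne E2ne by (auto simp: D_def)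
        then obtain w where w: "w \<in> rel_interior D"
          using rel_interior_eq_empty[OF convD] by blast
        then have "w \<in> D" using rel_interior_subset by blast
        then obtain x s y t where xs: "(x, s) \<in> E1" "(y, t) \<in> E2" "w = L ((x, s), (y, t))"
          unfolding D_def by force
        have "x \<in> edom phi1" using xs(1) E1(2)
          by (auto simp: edom_def epigraph_def)
        moreover have "y \<in> edom phi2" using xs(2) E2(2)
          by (auto simp: edom_def epigraph_def)
        ultimately have "az \<bullet> (x - y) = 0"
        proof -
          have "x - y = (x - x0) + (x0 - y)" by simp
          then have "az \<bullet> (x - y) = az \<bullet> (x - x0) + az \<bullet> (x0 - y)"
            by (simp only: inner_add_right)
          then show ?thesis using z1[OF \<open>x \<in> edom phi1\<close>] z2[OF \<open>y \<in> edom phi2\<close>] by simp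
        qed
        then show False using a(3)[OF w] xs(3) ar by (simp add: azr LD p_def)
      qed
      have arp: "ar > 0" using ar0 arn0 by simp
      define \<eta> where "\<eta> = - (1 / ar) *\<^sub>R az"
      have s1: "\<eta> \<in> subdiff phi1 xb"
        unfolding subdiff_def
      proof clarify
        fix x
        show "ereal (\<eta> \<bullet> (x - xb)) \<le> phi1 x - phi1 xb"
        proof (cases "phi1 x = \<infinity>")
          case True then show ?thesis using a1 by simp
        next
          case False
          then obtain b where b: "phi1 x = ereal b" "(x, b) \<in> epigraph phi1"
            using epi_fin[OF assms(1)] by auto
          have "ar * c \<le> az \<bullet> (x - xb) + ar * (b + a2 - \<xi> \<bullet> xb)"
            using ineq[OF b(2) a2(2)] .
          then have "ar * a1 \<le> az \<bullet> (x - xb) + ar * b"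
            by (simp add: c_def algebra_simps)
          then have "\<eta> \<bullet> (x - xb) \<le> b - a1"
            using arp by (simp add: \<eta>_def field_simps)
          then show ?thesis using b a1 by simp
        qed
      qed
      have s2: "\<xi> - \<eta> \<in> subdiff phi2 xb"
        unfolding subdiff_def
      proof clarify
        fix y
        show "ereal ((\<xi> - \<eta>) \<bullet> (y - xb)) \<le> phi2 y - phi2 xb"
        proof (cases "phi2 y = \<infinity>")
          case True then show ?thesis using a2 by simp
        next
          case False
          then obtain b where b: "phi2 y = ereal b" "(y, b) \<in> epigraph phi2"
            using epi_fin[OF assms(2)] by auto
          have "ar * c \<le> az \<bullet> (xb - y) + ar * (a1 + b - \<xi> \<bullet> y)"
            using ineq[OF a1(2) b(2)] .
          then have "ar * (a2 - b) \<le> az \<bullet> (xb - y) + ar * (\<xi> \<bullet> (xb - y))"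
            by (simp add: c_def algebra_simps inner_diff_right)
          then have h: "ar * (\<xi> \<bullet> (y - xb)) + az \<bullet> (y - xb) \<le> ar * (b - a2)"
            by (simp add: inner_diff_right algebra_simps)
          have eq: "(\<xi> - \<eta>) \<bullet> (y - xb) = (ar * (\<xi> \<bullet> (y - xb)) + az \<bullet> (y - xb)) / ar"
            using arp by (simp add: \<eta>_def inner_diff_left inner_add_left field_simps)
          have "(\<xi> - \<eta>) \<bullet> (y - xb) \<le> b - a2"
            unfolding eq using h arp by (simp add: divide_le_eq mult.commute)
          then show ?thesis using b a2 by simp
        qed
      qed
      show "\<xi> \<in> {a + b | a b. a \<in> subdiff phi1 xb \<and> b \<in> subdiff phi2 xb}"
        using s1 s2 by (intro CollectI exI[of _ \<eta>] exI[of _ "\<xi> - \<eta>"]) auto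
    qed
  qed
qed

end
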